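(* Let $G=(V,E)$ be a finite graph, $A\subset V$, $h\in\mathbb R^V$, $T>0$, and let $(\xi^+,\xi^-),(\zeta^+,\zeta^-)\in(\{-1,1\}^A)^2$ satisfy $\xi^+_v\le\zeta^+_v$ and $\xi^-_v\ge\zeta^-_v$ for all $v\in A$. Then for every increasing event $\mathtt A\subset\Theta^{\bar G}$, $$\bar\mu^{\xi^+/\xi^-}_{G,h}(\mathtt A)\le\bar\mu^{\zeta^+/\zeta^-}_{G,h}(\mathtt A).$$
   Context: Extended Ising model: for a finite graph $G=(V,E)$ let $\bar G=V\cup E$. An extended configuration $\bar\sigma$ assigns $\bar\sigma_v\in\{-1,1\}$ to each $v\in V$ and $\bar\sigma_e\in\{-1,0,1\}$ to each $e\in E$, subject to $|\bar\sigma_v-\bar\sigma_e|\le1$ whenever $v$ is an endpoint of $e$. For $T>0$ and $h\in\mathbb R^V$, $\bar\mu_{G,h}(\bar\sigma)\propto\prod_{e\in E}\prod_{v\in e}W(\bar\sigma_v,\bar\sigma_e)\cdot\exp\big(\frac1T\sum_{v\in V}h_v\bar\sigma_v\big)$, where $W(a,b)=1$ if $b=a$, $t$ if $b=0$, $0$ if $b=-a$, and $t=(e^{2/T}-1)^{-1/2}$. For $A\subset V$ and $\xi\in\{-1,1\}^A$, $\bar\mu^{\xi}_{G,h}$ is $\bar\mu_{G,h}$ conditioned on $\bar\sigma_v=\xi_v$, $v\in A$. $\bar\mu^{\xi^+/\xi^-}_{G,h}=\bar\mu^{\xi^+}_{G,h}\otimes\bar\mu^{\xi^-}_{G,h}$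 is a law on pairs $(\bar\sigma^1,\bar\sigma^2)$, viewed as elements of $\Theta^{\bar G}$, $\Theta=\{-1,0,1\}^2$. Partial order on $\Theta$: $(a,b)\succeq(c,d)$ iff $a\ge c$ and $b\le d$, extended coordinatewise; an event is increasing if it is closed upward under this order. *)

theory Defs
  imports Complex_Main
begin

(* Sites of the extended graph  Gbar = V \<union> E  : vertices are Inl v, edges are Inr e.  Configurations are functions on sites, extended by 0
   outside Gbar (so that they are determined by their values on Gbar). *)
type_synonym 'v site = "'v + 'v set"

definition is_graph :: "'v set \<Rightarrow> 'v set set \<Rightarrow> bool" where
  "is_graph V E \<longleftrightarrow> finite V \<and> (\<forall>e\<in>E. e \<subseteq> V \<and> card e = 2)"

definition sites :: "'v set \<Rightarrow> 'v set set \<Rightarrow> 'v site set" where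
  "sites V E = Inl ` V \<union> Inr ` E"

definition ext_configs :: "'v set \<Rightarrow> 'v set set \<Rightarrow> ('v site \<Rightarrow> int) set" where
  "ext_configs V E = {\<sigma>.
      (\<forall>x. x \<notin> sites V E \<longrightarrow> \<sigma> x = 0) \<and>
      (\<forall>v\<in>V. \<sigma> (Inl v) \<in> {-1, 1}) \<and>
      (\<forall>e\<in>E. \<sigma> (Inr e) \<in> {-1, 0, 1}) \<and>
      (\<forall>e\<in>E. \<forall>v\<in>e. \<bar>\<sigma> (Inl v) - \<sigma> (Inr e)\<bar> \<le> 1)}"

definition t_param :: "real \<Rightarrow> real" where
  "t_param T = 1 / sqrt (exp (2 / T) - 1)"

definition W :: "real \<Rightarrow> int \<Rightarrow> int \<Rightarrow> real" where
  "W T a b = (if b = a then 1 else if b = 0 then t_param T else 0)"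

definition weight :: "'v set \<Rightarrow> 'v set set \<Rightarrow> real \<Rightarrow> ('v \<Rightarrow> real) \<Rightarrow> ('v site \<Rightarrow> int) \<Rightarrow> real" where
  "weight V E T h \<sigma> =
     (\<Prod>e\<in>E. \<Prod>v\<in>e. W T (\<sigma> (Inl v)) (\<sigma> (Inr e))) *
     exp ((1 / T) * (\<Sum>v\<in>V. h v * of_int (\<sigma> (Inl v))))"

definition cond_configs :: "'v set \<Rightarrow> 'v set set \<Rightarrow> 'v set \<Rightarrow> ('v \<Rightarrow> int) \<Rightarrow> ('v site \<Rightarrow> int) set" where
  "cond_configs V E A \<xi> = {\<sigma> \<in> ext_configs V E. \<forall>v\<in>A. \<sigma> (Inl v) = \<xi> v}"

definition pair_config :: "('v site \<Rightarrow> int) \<Rightarrow> ('v site \<Rightarrow> int) \<Rightarrow> 'v site \<Rightarrow> int \<times> int" where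
  "pair_config \<sigma>1 \<sigma>2 = (\<lambda>x. (\<sigma>1 x, \<sigma>2 x))"

definition Theta :: "(int \<times> int) set" where
  "Theta = {-1, 0, 1} \<times> {-1, 0, 1}"

definition Theta_configs :: "'v set \<Rightarrow> 'v set set \<Rightarrow> ('v site \<Rightarrow> int \<times> int) set" where
  "Theta_configs V E = {\<eta>. (\<forall>x\<in>sites V E. \<eta> x \<in> Theta) \<and> (\<forall>x. x \<notin> sites V E \<longrightarrow> \<eta> x = (0, 0))}"

definition theta_ge :: "int \<times> int \<Rightarrow> int \<times> int \<Rightarrow> bool" where
  "theta_ge p q \<longleftrightarrow> fst p \<ge> fst q \<and> snd p \<le> snd q"

definition increasing_event :: "'v set \<Rightarrow> 'v set set \<Rightarrow> ('v site \<Rightarrow> int \<times> int) set \<Rightarrow> bool" where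
  "increasing_event V E Ev \<longleftrightarrow> Ev \<subseteq> Theta_configs V E \<and>
     (\<forall>\<eta>\<in>Ev. \<forall>\<eta>'\<in>Theta_configs V E.
        (\<forall>x\<in>sites V E. theta_ge (\<eta>' x) (\<eta> x)) \<longrightarrow> \<eta>' \<in> Ev)"

definition pair_measure ::
  "'v set \<Rightarrow> 'v set set \<Rightarrow> real \<Rightarrow> ('v \<Rightarrow> real) \<Rightarrow> 'v set \<Rightarrow> ('v \<Rightarrow> int) \<Rightarrow> ('v \<Rightarrow> int)
     \<Rightarrow> ('v site \<Rightarrow> int \<times> int) set \<Rightarrow> real" where
  "pair_measure V E T h A \<xi>p \<xi>m Ev =
     (\<Sum>(\<sigma>1, \<sigma>2) \<in> {(\<sigma>1, \<sigma>2) \<in> cond_configs V E A \<xi>p \<times> cond_configs V E A \<xi>m.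
                      pair_config \<sigma>1 \<sigma>2 \<in> Ev}.
        weight V E T h \<sigma>1 * weight V E T h \<sigma>2)
     / ((\<Sum>\<sigma>\<in>cond_configs V E A \<xi>p. weight V E T h \<sigma>) *
        (\<Sum>\<sigma>\<in>cond_configs V E A \<xi>m. weight V E T h \<sigma>))"

end

theory Submission imports Defs begin

lemma two_point:
  fixes a0 a1 b0 b1 c0 c1 d0 d1 :: real
  assumes "a0 \<ge> 0" "a1 \<ge> 0" "b0 \<ge> 0" "b1 \<ge> 0" "c0 \<ge> 0" "c1 \<ge> 0" "d0 \<ge> 0" "d1 \<ge> 0"
    and h00: "a0*b0 \<le> c0*d0" and h11: "a1*b1 \<le> c1*d1"
    and h01: "a0*b1 \<le> c1*d0" and h10: "a1*b0 \<le> c1*d0"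
  shows "(a0+a1)*(b0+b1) \<le> (c0+c1)*(d0+d1)"
proof -
  have key: "a0*b1 + a1*b0 \<le> c1*d0 + c0*d1"
  proof (cases "c1*d0 = 0")
    case True
    have "a0*b1 \<ge> 0" "a1*b0 \<ge> 0" "c0*d1 \<ge> 0" using assms by simp_all
    then show ?thesis using True h01 h10 by linarith
  next
    case False
    define r where "r = c1*d0"
    define p where "p = a0*b1"
    define q where "q = a1*b0"
    define s where "s = c0*d1"
    have r0: "r > 0" using False assms unfolding r_def by simp
    have "(a0*b1)*(a1*b0) = (a0*b0)*(a1*b1)" by (simp add: algebra_simps)
    also have "\<dots> \<le> (c0*d0)*(c1*d1)"
      by (rule mult_mono[OF h00 h11]) (use assms in simp_all)
    also have "\<dots> = s * r" unfolding s_def r_def by (simp add: algebra_simps)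
    finally have pq: "p*q \<le> s*r" unfolding p_def q_def .
    have "(r-p)*(r-q) \<ge> 0" using h01 h10 unfolding r_def p_def q_def
      by (intro mult_nonneg_nonneg) simp_all
    moreover have "r*(r+s-p-q) = (r-p)*(r-q) + (s*r - p*q)" by (simp add: algebra_simps)
    ultimately have "r*(r+s-p-q) \<ge> 0" using pq by linarith
    then have "r+s-p-q \<ge> 0" using r0 by (simp add: zero_le_mult_iff)
    then show ?thesis unfolding r_def s_def p_def q_def by linarith
  qed
  show ?thesis using key h00 h11 by (simp add: algebra_simps)
qed

lemma sum_Pow_insert:
  assumes "finite U" "u \<notin> U"
  shows "sum f (Pow (insert u U)) = (\<Sum>X\<in>Pow U. f X + f (insert u X))"
proof -
  have inj: "inj_on (insert u) (Pow U)"
    using assms(2) by (auto simp: inj_on_def)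
  have disj: "Pow U \<inter> insert u ` Pow U = {}" using assms(2) by auto
  have "sum f (Pow (insert u U)) = sum f (Pow U) + sum f (insert u ` Pow U)"
    unfolding Pow_insert using assms(1) disj by (simp add: sum.union_disjoint)
  also have "sum f (insert u ` Pow U) = (\<Sum>X\<in>Pow U. f (insert u X))"
    using inj by (simp add: sum.reindex)
  finally show ?thesis by (simp add: sum.distrib)
qed

lemma four_functions:
  fixes \<alpha> \<beta> \<gamma> \<delta> :: "'a set \<Rightarrow> real"
  assumes "finite U"
    and "\<And>X. \<alpha> X \<ge> 0" "\<And>X. \<beta> X \<ge> 0" "\<And>X. \<gamma> X \<ge> 0" "\<And>X. \<delta> X \<ge> 0"
    and "\<And>X Y. X \<subseteq> U \<Longrightarrow> Y \<subseteq> U \<Longrightarrow> \<alpha> X * \<beta> Y \<le> \<gamma> (X \<union> Y) * \<delta> (X \<inter> Y)"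
  shows "sum \<alpha> (Pow U) * sum \<beta> (Pow U) \<le> sum \<gamma> (Pow U) * sum \<delta> (Pow U)"
  using assms
proof (induction U arbitrary: \<alpha> \<beta> \<gamma> \<delta> rule: finite_induct)
  case empty
  then show ?case using empty.prems(5)[of "{}" "{}"] by simp
next
  case (insert u U)
  have H: "\<And>X Y. X \<subseteq> insert u U \<Longrightarrow> Y \<subseteq> insert u U \<Longrightarrow> \<alpha> X * \<beta> Y \<le> \<gamma> (X \<union> Y) * \<delta> (X \<inter> Y)"
    by (rule insert.prems(5))
  have "(\<Sum>X\<in>Pow U. \<alpha> X + \<alpha> (insert u X)) * (\<Sum>X\<in>Pow U. \<beta> X + \<beta> (insert u X))
     \<le> (\<Sum>X\<in>Pow U. \<gamma> X + \<gamma> (insert u X)) * (\<Sum>X\<in>Pow U. \<delta> X + \<delta> (insert u X))"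
  proof (rule insert.IH)
    fix X Y assume X: "X \<subseteq> U" and Y: "Y \<subseteq> U"
    have uX: "u \<notin> X" "u \<notin> Y" using X Y insert.hyps(2) by auto
    have XY: "X \<subseteq> insert u U" "Y \<subseteq> insert u U" "insert u X \<subseteq> insert u U" "insert u Y \<subseteq> insert u U"
      using X Y by auto
    have e1: "insert u X \<union> insert u Y = insert u (X \<union> Y)" by auto
    have e2: "insert u X \<inter> insert u Y = insert u (X \<inter> Y)" by auto
    have e3: "X \<union> insert u Y = insert u (X \<union> Y)" by auto
    have e4: "X \<inter> insert u Y = X \<inter> Y" using uX by auto
    have e5: "insert u X \<union> Y = insert u (X \<union> Y)" by auto
    have e6: "insert u X \<inter> Y = X \<inter> Y" using uX by auto
    show "(\<alpha> X + \<alpha> (insert u X)) * (\<beta> Y + \<beta> (insert u Y))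
          \<le> (\<gamma> (X \<union> Y) + \<gamma> (insert u (X \<union> Y))) * (\<delta> (X \<inter> Y) + \<delta> (insert u (X \<inter> Y)))"
      apply (rule two_point)
      using insert.prems(1-4) apply simp_all[8]
      using H[OF XY(1) XY(2)] apply simp
      using H[OF XY(3) XY(4)] apply (simp only: e1 e2)
      using H[OF XY(1) XY(4)] apply (simp only: e3 e4)
      using H[OF XY(3) XY(2)] apply (simp only: e5 e6)
      done
  qed (use insert.prems in \<open>simp_all add: add_nonneg_nonneg\<close>)
  then show ?case using insert.hyps by (simp add: sum_Pow_insert)
qed

lemma t_param_pos: "T > 0 \<Longrightarrow> t_param T > 0"
  unfolding t_param_def by simp

lemma W_nonneg: "T > 0 \<Longrightarrow> W T a b \<ge> 0"
  unfolding W_def using t_param_pos[of T] by simp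

lemma weight_nonneg: "T > 0 \<Longrightarrow> weight V E T h \<sigma> \<ge> 0"
  unfolding weight_def by (intro mult_nonneg_nonneg prod_nonneg W_nonneg) auto

lemma W_maxmin:
  fixes a a' b b' :: int
  assumes "a \<in> {-1,1}" "a' \<in> {-1,1}" "b \<in> {-1,0,1}" "b' \<in> {-1,0,1}" "\<bar>a - b\<bar> \<le> 1" "\<bar>a' - b'\<bar> \<le> 1"
  shows "W T a b * W T a' b' = W T (max a a') (max b b') * W T (min a a') (min b b')"
  using assms by (auto simp: W_def)

lemma finite_sites: "is_graph V E \<Longrightarrow> finite (sites V E)"
proof -
  assume g: "is_graph V E"
  then have "finite V" by (simp add: is_graph_def)
  moreover have "E \<subseteq> Pow V" using g by (auto simp: is_graph_def)
  ultimately have "finite E" by (meson finite_Pow_iff finite_subset)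
  then show ?thesis using \<open>finite V\<close> by (simp add: sites_def)
qed

lemma ext_vals: "\<sigma> \<in> ext_configs V E \<Longrightarrow> \<sigma> x \<in> {-1,0,1}"
  unfolding ext_configs_def sites_def by (cases x) force+

lemma finite_ext: "is_graph V E \<Longrightarrow> finite (ext_configs V E)"
proof -
  assume g: "is_graph V E"
  have "ext_configs V E \<subseteq> {f. \<forall>x. (x \<in> sites V E \<longrightarrow> f x \<in> {-1,0,1::int}) \<and> (x \<notin> sites V E \<longrightarrow> f x = 0)}"
    using ext_vals by (auto simp: ext_configs_def)
  then show ?thesis using finite_set_of_finite_funs[OF finite_sites[OF g], of "{-1,0,1::int}" 0]
    by (meson finite.emptyI finite.insertI finite_subset)
qed

lemma ext_max: assumes s: "\<sigma> \<in> ext_configs V E" and t: "\<tau> \<in> ext_configs V E"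
  shows "(\<lambda>x. max (\<sigma> x) (\<tau> x)) \<in> ext_configs V E"
proof -
  have "\<bar>max (\<sigma> (Inl v)) (\<tau> (Inl v)) - max (\<sigma> (Inr e)) (\<tau> (Inr e))\<bar> \<le> 1" if "e \<in> E" "v \<in> e" for e v
  proof -
    have "\<bar>\<sigma> (Inl v) - \<sigma> (Inr e)\<bar> \<le> 1" "\<bar>\<tau> (Inl v) - \<tau> (Inr e)\<bar> \<le> 1"
      using s t that unfolding ext_configs_def by blast+
    then show ?thesis by (simp add: abs_le_iff max_def)
  qed
  then show ?thesis using s t unfolding ext_configs_def by (auto simp: max_def)
qed

lemma ext_min: assumes s: "\<sigma> \<in> ext_configs V E" and t: "\<tau> \<in> ext_configs V E"
  shows "(\<lambda>x. min (\<sigma> x) (\<tau> x)) \<in> ext_configs V E"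
proof -
  have "\<bar>min (\<sigma> (Inl v)) (\<tau> (Inl v)) - min (\<sigma> (Inr e)) (\<tau> (Inr e))\<bar> \<le> 1" if "e \<in> E" "v \<in> e" for e v
  proof -
    have "\<bar>\<sigma> (Inl v) - \<sigma> (Inr e)\<bar> \<le> 1" "\<bar>\<tau> (Inl v) - \<tau> (Inr e)\<bar> \<le> 1"
      using s t that unfolding ext_configs_def by blast+
    then show ?thesis by (simp add: abs_le_iff min_def)
  qed
  then show ?thesis using s t unfolding ext_configs_def by (auto simp: min_def)
qed

lemma weight_maxmin:
  assumes g: "is_graph V E" and s: "\<sigma> \<in> ext_configs V E" and t: "\<tau> \<in> ext_configs V E"
  shows "weight V E T h \<sigma> * weight V E T h \<tau> =
         weight V E T h (\<lambda>x. max (\<sigma> x) (\<tau> x)) * weight V E T h (\<lambda>x. min (\<sigma> x) (\<tau> x))"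
proof -
  have VE: "\<And>e v. e \<in> E \<Longrightarrow> v \<in> e \<Longrightarrow> v \<in> V" using g by (auto simp: is_graph_def)
  have P: "(\<Prod>e\<in>E. \<Prod>v\<in>e. W T (\<sigma> (Inl v)) (\<sigma> (Inr e))) * (\<Prod>e\<in>E. \<Prod>v\<in>e. W T (\<tau> (Inl v)) (\<tau> (Inr e)))
     = (\<Prod>e\<in>E. \<Prod>v\<in>e. W T (max (\<sigma> (Inl v)) (\<tau> (Inl v))) (max (\<sigma> (Inr e)) (\<tau> (Inr e))))
     * (\<Prod>e\<in>E. \<Prod>v\<in>e. W T (min (\<sigma> (Inl v)) (\<tau> (Inl v))) (min (\<sigma> (Inr e)) (\<tau> (Inr e))))"
    unfolding prod.distrib[symmetric]
  proof (intro prod.cong refl)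
    fix e v assume e: "e \<in> E" and v: "v \<in> e"
    have vV: "v \<in> V" using VE e v .
    show "W T (\<sigma> (Inl v)) (\<sigma> (Inr e)) * W T (\<tau> (Inl v)) (\<tau> (Inr e)) =
          W T (max (\<sigma> (Inl v)) (\<tau> (Inl v))) (max (\<sigma> (Inr e)) (\<tau> (Inr e))) *
          W T (min (\<sigma> (Inl v)) (\<tau> (Inl v))) (min (\<sigma> (Inr e)) (\<tau> (Inr e)))"
      by (rule W_maxmin) (use s t e v vV in \<open>auto simp: ext_configs_def\<close>)
  qed
  have S: "(\<Sum>v\<in>V. h v * of_int (\<sigma> (Inl v))) + (\<Sum>v\<in>V. h v * of_int (\<tau> (Inl v)))
      = (\<Sum>v\<in>V. h v * of_int (max (\<sigma> (Inl v)) (\<tau> (Inl v)))) + (\<Sum>v\<in>V. h v * of_int (min (\<sigma> (Inl v)) (\<tau> (Inl v))))"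
    unfolding sum.distrib[symmetric]
    by (intro sum.cong refl) (simp add: max_def min_def algebra_simps)
  have X: "exp ((1/T) * (\<Sum>v\<in>V. h v * of_int (\<sigma> (Inl v)))) * exp ((1/T) * (\<Sum>v\<in>V. h v * of_int (\<tau> (Inl v))))
     = exp ((1/T) * (\<Sum>v\<in>V. h v * of_int (max (\<sigma> (Inl v)) (\<tau> (Inl v))))) * exp ((1/T) * (\<Sum>v\<in>V. h v * of_int (min (\<sigma> (Inl v)) (\<tau> (Inl v)))))"
    unfolding exp_add[symmetric] using S by (simp add: add_divide_distrib[symmetric])
  show ?thesis unfolding weight_def
    using P X by (simp add: algebra_simps)
qed

lemma Z_pos:
  assumes g: "is_graph V E" and AV: "A \<subseteq> V" and T: "T > 0" and xi: "\<forall>v\<in>A. \<xi> v \<in> {-1,1}"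
  shows "sum (weight V E T h) (cond_configs V E A \<xi>) > 0"
proof -
  define \<sigma> :: "'a site \<Rightarrow> int" where
    "\<sigma> = (\<lambda>x. case x of Inl v \<Rightarrow> if v \<in> V then (if v \<in> A then \<xi> v else 1) else 0 | Inr e \<Rightarrow> 0)"
  have VE: "\<And>e v. e \<in> E \<Longrightarrow> v \<in> e \<Longrightarrow> v \<in> V" using g by (auto simp: is_graph_def)
  have vals: "\<And>v. v \<in> V \<Longrightarrow> \<sigma> (Inl v) \<in> {-1,1}" using xi by (auto simp: \<sigma>_def)
  have out: "\<forall>x. x \<notin> sites V E \<longrightarrow> \<sigma> x = 0"
  proof (intro allI impI)
    fix x assume "x \<notin> sites V E"
    then show "\<sigma> x = 0" by (cases x) (auto simp: \<sigma>_def sites_def)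
  qed
  have edge: "\<forall>e\<in>E. \<forall>v\<in>e. \<bar>\<sigma> (Inl v) - \<sigma> (Inr e)\<bar> \<le> 1"
    using vals VE by (fastforce simp: \<sigma>_def)
  have mem: "\<sigma> \<in> cond_configs V E A \<xi>"
    unfolding cond_configs_def ext_configs_def
    using out edge vals AV by (auto simp: \<sigma>_def)
  have fin: "finite (cond_configs V E A \<xi>)"
    using finite_ext[OF g] by (rule finite_subset[rotated]) (auto simp: cond_configs_def)
  have "weight V E T h \<sigma> > 0"
    unfolding weight_def
  proof (intro mult_pos_pos prod_pos exp_gt_zero)
    fix e v assume "e \<in> E" "v \<in> e"
    then have "\<sigma> (Inl v) \<in> {-1,1}" "\<sigma> (Inr e) = 0" using vals VE by (auto simp: \<sigma>_def)
    then show "W T (\<sigma> (Inl v)) (\<sigma> (Inr e)) > 0" using t_param_pos[OF T] by (auto simp: W_def)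
  qed
  then show ?thesis
    by (intro sum_pos2[OF fin mem]) (auto intro: weight_nonneg T)
qed

definition enc :: "'v site set \<Rightarrow> ('v site \<Rightarrow> int) \<times> ('v site \<Rightarrow> int) \<Rightarrow> (bool \<times> 'v site \<times> int) set" where
  "enc S p = {(b,x,k). x \<in> S \<and> k \<in> {0,1} \<and> (if b then k \<le> fst p x else k \<le> - snd p x)}"

definition pjoin :: "('v site \<Rightarrow> int) \<times> ('v site \<Rightarrow> int) \<Rightarrow> ('v site \<Rightarrow> int) \<times> ('v site \<Rightarrow> int) \<Rightarrow> ('v site \<Rightarrow> int) \<times> ('v site \<Rightarrow> int)" where
  "pjoin p q = ((\<lambda>x. max (fst p x) (fst q x)), (\<lambda>x. min (snd p x) (snd q x)))"

definition pmeet :: "('v site \<Rightarrow> int) \<times> ('v site \<Rightarrow> int) \<Rightarrow> ('v site \<Rightarrow> int) \<times> ('v site \<Rightarrow> int) \<Rightarrow> ('v site \<Rightarrow> int) \<times> ('v site \<Rightarrow> int)" where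
  "pmeet p q = ((\<lambda>x. min (fst p x) (fst q x)), (\<lambda>x. max (snd p x) (snd q x)))"

lemma enc_join: "enc S p \<union> enc S q = enc S (pjoin p q)"
  unfolding enc_def pjoin_def by (auto simp: max_def min_def split: if_splits)

lemma enc_meet: "enc S p \<inter> enc S q = enc S (pmeet p q)"
  unfolding enc_def pmeet_def by (auto simp: max_def min_def split: if_splits)

lemma ext_eq:
  assumes s: "\<sigma> \<in> ext_configs V E" and t: "\<tau> \<in> ext_configs V E"
    and h: "\<And>x k. x \<in> sites V E \<Longrightarrow> k \<in> {0,1} \<Longrightarrow> (k \<le> \<sigma> x \<longleftrightarrow> k \<le> \<tau> x)"
  shows "\<sigma> = \<tau>"
proof
  fix x show "\<sigma> x = \<tau> x"
  proof (cases "x \<in> sites V E")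
    case True
    then show ?thesis using h[OF True, of 0] h[OF True, of 1] ext_vals[OF s, of x] ext_vals[OF t, of x]
      by auto
  next
    case False
    then show ?thesis using s t by (auto simp: ext_configs_def)
  qed
qed

lemma ext_neg: assumes s: "\<sigma> \<in> ext_configs V E" shows "(\<lambda>x. - \<sigma> x) \<in> ext_configs V E"
proof -
  have a: "\<forall>x. x \<notin> sites V E \<longrightarrow> \<sigma> x = 0" "\<forall>v\<in>V. \<sigma> (Inl v) \<in> {-1, 1}"
    "\<forall>e\<in>E. \<sigma> (Inr e) \<in> {-1, 0, 1}" "\<forall>e\<in>E. \<forall>v\<in>e. \<bar>\<sigma> (Inl v) - \<sigma> (Inr e)\<bar> \<le> 1"
    using s unfolding ext_configs_def by blast+
  have b: "\<forall>e\<in>E. \<forall>v\<in>e. \<bar>- \<sigma> (Inl v) - - \<sigma> (Inr e)\<bar> \<le> 1"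
  proof (intro ballI)
    fix e v assume "e \<in> E" "v \<in> e"
    then have "\<bar>\<sigma> (Inl v) - \<sigma> (Inr e)\<bar> \<le> 1" using a(4) by blast
    then show "\<bar>- \<sigma> (Inl v) - - \<sigma> (Inr e)\<bar> \<le> 1" by linarith
  qed
  have c: "\<forall>v\<in>V. - \<sigma> (Inl v) \<in> {-1, 1}" using a(2) by force
  have d: "\<forall>e\<in>E. - \<sigma> (Inr e) \<in> {-1, 0, 1}" using a(3) by force
  show ?thesis unfolding ext_configs_def using a(1) b c d by simp
qed

lemma enc_inj:
  assumes "p \<in> ext_configs V E \<times> ext_configs V E" "q \<in> ext_configs V E \<times> ext_configs V E"
    and e: "enc (sites V E) p = enc (sites V E) q"
  shows "p = q"
proof -
  have h: "\<And>b x k. x \<in> sites V E \<Longrightarrow> k \<in> {0,1} \<Longrightarrow>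
     (if b then k \<le> fst p x else k \<le> - snd p x) = (if b then k \<le> fst q x else k \<le> - snd q x)"
  proof -
    fix b x k assume "x \<in> sites V E" "(k::int) \<in> {0,1}"
    then have "(b,x,k) \<in> enc (sites V E) p \<longleftrightarrow> (b,x,k) \<in> enc (sites V E) q" using e by simp
    then show "(if b then k \<le> fst p x else k \<le> - snd p x) = (if b then k \<le> fst q x else k \<le> - snd q x)"
      using \<open>x \<in> sites V E\<close> \<open>k \<in> {0,1}\<close> unfolding enc_def by simp
  qed
  have 1: "fst p = fst q"
  proof (rule ext_eq)
    show "fst p \<in> ext_configs V E" "fst q \<in> ext_configs V E" using assms(1,2) by (simp_all add: mem_Times_iff)
    fix x k assume "x \<in> sites V E" "(k::int) \<in> {0,1}"
    from h[where b=True, OF this] show "(k \<le> fst p x) = (k \<le> fst q x)" by simp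
  qed
  have 3: "(\<lambda>x. - snd p x) = (\<lambda>x. - snd q x)"
  proof (rule ext_eq)
    show "(\<lambda>x. - snd p x) \<in> ext_configs V E" "(\<lambda>x. - snd q x) \<in> ext_configs V E"
      using assms(1,2) by (simp_all add: mem_Times_iff ext_neg)
    fix x k assume "x \<in> sites V E" "(k::int) \<in> {0,1}"
    from h[where b=False, OF this] show "(k \<le> - snd p x) = (k \<le> - snd q x)" by simp
  qed
  have 2: "snd p = snd q"
  proof
    fix x show "snd p x = snd q x" using fun_cong[OF 3, of x] by simp
  qed
  show ?thesis using 1 2 by (simp add: prod_eq_iff)
qed

theorem lemma2p4:
  fixes V :: "'v set" and E :: "'v set set" and A :: "'v set"
    and h :: "'v \<Rightarrow> real" and T :: real
    and \<xi>p \<xi>m \<zeta>p \<zeta>m :: "'v \<Rightarrow> int"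
    and Ev :: "('v + 'v set \<Rightarrow> int \<times> int) set"
  assumes "is_graph V E"
    and "A \<subseteq> V"
    and "T > 0"
    and "\<forall>v\<in>A. \<xi>p v \<in> {-1, 1} \<and> \<xi>m v \<in> {-1, 1} \<and> \<zeta>p v \<in> {-1, 1} \<and> \<zeta>m v \<in> {-1, 1}"
    and "\<forall>v\<in>A. \<xi>p v \<le> \<zeta>p v \<and> \<xi>m v \<ge> \<zeta>m v"
    and "increasing_event V E Ev"
  shows "pair_measure V E T h A \<xi>p \<xi>m Ev \<le> pair_measure V E T h A \<zeta>p \<zeta>m Ev"
proof -
  note g = assms(1) and T = assms(3)
  define w where "w = weight V E T h"
  define w2 where "w2 = (\<lambda>(s1, s2). w s1 * w s2)"
  define P where "P = (\<lambda>(s1, s2). pair_config s1 s2 \<in> Ev)"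
  define C where "C = cond_configs V E A"
  define D1 where "D1 = C \<xi>p \<times> C \<xi>m"
  define D2 where "D2 = C \<zeta>p \<times> C \<zeta>m"
  define S where "S = sites V E"
  define U :: "(bool \<times> 'v site \<times> int) set" where "U = UNIV \<times> S \<times> {0,1}"
  define fib where "fib = (\<lambda>D X. sum w2 {p \<in> D. enc S p = X})"
  define X2 where "X2 = ext_configs V E \<times> ext_configs V E"
  have w_nn: "\<And>s. w s \<ge> 0" unfolding w_def using T by (rule weight_nonneg)
  have w2_nn: "\<And>p. w2 p \<ge> 0" unfolding w2_def using w_nn by (auto intro: mult_nonneg_nonneg)
  have finC: "\<And>\<xi>. finite (C \<xi>)"
    unfolding C_def using finite_ext[OF g] by (rule finite_subset[rotated]) (auto simp: cond_configs_def)
  have finD: "finite D1" "finite D2" unfolding D1_def D2_def using finC by auto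
  have finU: "finite U" unfolding U_def S_def using finite_sites[OF g] by simp
  have CX: "\<And>\<xi>. C \<xi> \<subseteq> ext_configs V E" unfolding C_def cond_configs_def by auto
  have DX: "D1 \<subseteq> X2" "D2 \<subseteq> X2" unfolding D1_def D2_def X2_def using CX by auto
  have encU: "\<And>p. enc S p \<subseteq> U" unfolding enc_def U_def by auto
  have sumfib: "\<And>D. finite D \<Longrightarrow> sum (fib D) (Pow U) = sum w2 D"
    unfolding fib_def by (rule sum.group) (use finU encU in auto)
  have fib_nn: "\<And>D X. fib D X \<ge> 0" unfolding fib_def using w2_nn by (simp add: sum_nonneg)
  have fibsing: "\<And>D p. D \<subseteq> X2 \<Longrightarrow> p \<in> D \<Longrightarrow> fib D (enc S p) = w2 p"
  proof -
    fix D p assume D: "D \<subseteq> X2" and p: "p \<in> D"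
    have "{p' \<in> D. enc S p' = enc S p} = {p}"
      using enc_inj[of _ V E p] D p unfolding X2_def S_def by blast
    then show "fib D (enc S p) = w2 p" unfolding fib_def by simp
  qed
  have join_in: "pjoin p q \<in> D2" if "p \<in> D1" "q \<in> D2" for p q
  proof -
    obtain s1 s2 t1 t2 where pq: "p = (s1, s2)" "q = (t1, t2)" by fastforce
    have s: "s1 \<in> C \<xi>p" "s2 \<in> C \<xi>m" "t1 \<in> C \<zeta>p" "t2 \<in> C \<zeta>m" using that pq D1_def D2_def by auto
    have "(\<lambda>x. max (s1 x) (t1 x)) \<in> C \<zeta>p"
      using s assms(5) ext_max[of s1 V E t1] unfolding C_def cond_configs_def by auto
    moreover have "(\<lambda>x. min (s2 x) (t2 x)) \<in> C \<zeta>m"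
      using s assms(5) ext_min[of s2 V E t2] unfolding C_def cond_configs_def by auto
    ultimately show ?thesis unfolding D2_def pjoin_def pq by simp
  qed
  have meet_in: "pmeet p q \<in> D1" if "p \<in> D1" "q \<in> D2" for p q
  proof -
    obtain s1 s2 t1 t2 where pq: "p = (s1, s2)" "q = (t1, t2)" by fastforce
    have s: "s1 \<in> C \<xi>p" "s2 \<in> C \<xi>m" "t1 \<in> C \<zeta>p" "t2 \<in> C \<zeta>m" using that pq D1_def D2_def by auto
    have "(\<lambda>x. min (s1 x) (t1 x)) \<in> C \<xi>p"
      using s assms(5) ext_min[of s1 V E t1] unfolding C_def cond_configs_def by auto
    moreover have "(\<lambda>x. max (s2 x) (t2 x)) \<in> C \<xi>m"
      using s assms(5) ext_max[of s2 V E t2] unfolding C_def cond_configs_def by auto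
    ultimately show ?thesis unfolding D1_def pmeet_def pq by simp
  qed
  have P_join: "P (pjoin p q)" if "p \<in> D1" "q \<in> D2" "P p" for p q
  proof -
    obtain s1 s2 t1 t2 where pq: "p = (s1, s2)" "q = (t1, t2)" by fastforce
    have jx: "pjoin p q \<in> X2" using join_in[OF that(1,2)] DX by auto
    have inc: "\<forall>\<eta>\<in>Ev. \<forall>\<eta>'\<in>Theta_configs V E. (\<forall>x\<in>sites V E. theta_ge (\<eta>' x) (\<eta> x)) \<longrightarrow> \<eta>' \<in> Ev"
      using assms(6) unfolding increasing_event_def by blast
    have ev: "pair_config s1 s2 \<in> Ev" using that(3) pq P_def by simp
    have th: "pair_config (\<lambda>x. max (s1 x) (t1 x)) (\<lambda>x. min (s2 x) (t2 x)) \<in> Theta_configs V E"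
    proof -
      have a: "(\<lambda>x. max (s1 x) (t1 x)) \<in> ext_configs V E" "(\<lambda>x. min (s2 x) (t2 x)) \<in> ext_configs V E"
        using jx pq unfolding X2_def pjoin_def by auto
      show ?thesis unfolding Theta_configs_def pair_config_def Theta_def
        using ext_vals[OF a(1)] ext_vals[OF a(2)] a unfolding ext_configs_def by auto
    qed
    have "pair_config (\<lambda>x. max (s1 x) (t1 x)) (\<lambda>x. min (s2 x) (t2 x)) \<in> Ev"
      using inc ev th by (auto simp: theta_ge_def pair_config_def)
    then show ?thesis unfolding P_def pjoin_def pq by simp
  qed
  have w2_eq: "w2 p * w2 q = w2 (pjoin p q) * w2 (pmeet p q)" if "p \<in> X2" "q \<in> X2" for p q
  proof -
    obtain s1 s2 t1 t2 where pq: "p = (s1, s2)" "q = (t1, t2)" by fastforce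
    have s: "s1 \<in> ext_configs V E" "s2 \<in> ext_configs V E" "t1 \<in> ext_configs V E" "t2 \<in> ext_configs V E"
      using that pq X2_def by auto
    have e1: "w s1 * w t1 = w (\<lambda>x. max (s1 x) (t1 x)) * w (\<lambda>x. min (s1 x) (t1 x))"
      unfolding w_def by (rule weight_maxmin[OF g s(1) s(3)])
    have e2: "w s2 * w t2 = w (\<lambda>x. max (s2 x) (t2 x)) * w (\<lambda>x. min (s2 x) (t2 x))"
      unfolding w_def by (rule weight_maxmin[OF g s(2) s(4)])
    have "w2 p * w2 q = (w s1 * w t1) * (w s2 * w t2)" unfolding w2_def pq by (simp add: algebra_simps)
    also have "\<dots> = w2 (pjoin p q) * w2 (pmeet p q)"
      unfolding e1 e2 w2_def pjoin_def pmeet_def pq by (simp add: algebra_simps)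
    finally show ?thesis .
  qed
  define D1P where "D1P = {p \<in> D1. P p}"
  define D2P where "D2P = {p \<in> D2. P p}"
  have D1PX: "D1P \<subseteq> X2" "D2P \<subseteq> X2" using DX unfolding D1P_def D2P_def by auto
  have ff: "sum (fib D1P) (Pow U) * sum (fib D2) (Pow U) \<le> sum (fib D2P) (Pow U) * sum (fib D1) (Pow U)"
  proof (rule four_functions[OF finU fib_nn fib_nn fib_nn fib_nn])
    fix X Y
    show "fib D1P X * fib D2 Y \<le> fib D2P (X \<union> Y) * fib D1 (X \<inter> Y)"
    proof (cases "\<exists>p\<in>D1P. enc S p = X")
      case False
      then have "{p \<in> D1P. enc S p = X} = {}" by auto
      then have "fib D1P X = 0" unfolding fib_def by (simp only: sum.empty)
      then show ?thesis using fib_nn by (simp add: mult_nonneg_nonneg)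
    next
      case True
      then obtain p where p: "p \<in> D1P" "enc S p = X" by blast
      show ?thesis
      proof (cases "\<exists>q\<in>D2. enc S q = Y")
        case False
        then have "{p \<in> D2. enc S p = Y} = {}" by auto
        then have "fib D2 Y = 0" unfolding fib_def by (simp only: sum.empty)
        then show ?thesis using fib_nn by (simp add: mult_nonneg_nonneg)
      next
        case True
        then obtain q where q: "q \<in> D2" "enc S q = Y" by blast
        have pD1: "p \<in> D1" "P p" using p(1) D1P_def by auto
        have j: "pjoin p q \<in> D2P" using join_in[OF pD1(1) q(1)] P_join[OF pD1(1) q(1) pD1(2)] D2P_def by auto
        have m: "pmeet p q \<in> D1" using meet_in[OF pD1(1) q(1)] .
        have "fib D1P X * fib D2 Y = w2 p * w2 q"
          using fibsing[OF D1PX(1) p(1)] fibsing[OF DX(2) q(1)] p(2) q(2) by simp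
        also have "\<dots> = w2 (pjoin p q) * w2 (pmeet p q)"
          using w2_eq DX pD1(1) q(1) by blast
        also have "\<dots> = fib D2P (X \<union> Y) * fib D1 (X \<inter> Y)"
          using fibsing[OF D1PX(2) j] fibsing[OF DX(1) m] p(2) q(2) enc_join[of S p q] enc_meet[of S p q] by simp
        finally show ?thesis by simp
      qed
    qed
  qed
  have finP: "finite D1P" "finite D2P" using finD unfolding D1P_def D2P_def by auto
  have key: "sum w2 D1P * sum w2 D2 \<le> sum w2 D2P * sum w2 D1"
    using ff finP finD by (simp add: sumfib)
  have pm: "pair_measure V E T h A a b Ev = sum w2 {p \<in> C a \<times> C b. P p} / sum w2 (C a \<times> C b)" for a b
  proof -
    have n: "{(\<sigma>1, \<sigma>2) \<in> C a \<times> C b. pair_config \<sigma>1 \<sigma>2 \<in> Ev} = {p \<in> C a \<times> C b. P p}"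
      unfolding P_def by auto
    have d: "(\<Sum>\<sigma>\<in>C a. w \<sigma>) * (\<Sum>\<sigma>\<in>C b. w \<sigma>) = sum w2 (C a \<times> C b)"
      unfolding w2_def by (simp add: sum_product sum.cartesian_product)
    show ?thesis unfolding pair_measure_def C_def[symmetric] w_def[symmetric] n d[symmetric]
      unfolding w2_def by simp
  qed
  have Z1: "sum w2 D1 > 0"
  proof -
    have "sum w2 D1 = sum w (C \<xi>p) * sum w (C \<xi>m)"
      unfolding D1_def w2_def by (simp add: sum_product sum.cartesian_product)
    moreover have "sum w (C \<xi>p) > 0" "sum w (C \<xi>m) > 0"
      unfolding w_def C_def using Z_pos[OF g assms(2) T] assms(4) by auto
    ultimately show ?thesis by simp
  qed
  have Z2: "sum w2 D2 > 0"
  proof -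
    have "sum w2 D2 = sum w (C \<zeta>p) * sum w (C \<zeta>m)"
      unfolding D2_def w2_def by (simp add: sum_product sum.cartesian_product)
    moreover have "sum w (C \<zeta>p) > 0" "sum w (C \<zeta>m) > 0"
      unfolding w_def C_def using Z_pos[OF g assms(2) T] assms(4) by auto
    ultimately show ?thesis by simp
  qed
  have "sum w2 D1P / sum w2 D1 \<le> sum w2 D2P / sum w2 D2"
    using key Z1 Z2 by (simp add: divide_le_eq le_divide_eq mult.commute mult.left_commute)
  then show ?thesis unfolding pm D1P_def D2P_def D1_def D2_def .
qed

end
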